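(* (Provably in $\mathsf{Z}^-_{\mathrm{FTM}\omega}$.) Let $F$ be a class-function whose domain $D=\mathrm{dom}F$ is a set, and let $R=F[D]=\{F(x):x\in D\}$. Then $F$ and $R$ are sets in each of the following two cases: (1) $R$ is transitive; (2) there is a set $Y$ such that every element of $R$ is a subset of $Y$.
   Context: $\mathsf{Z}^-_{\mathrm{FTM}\omega}$ is Zermelo set theory without Power Set and Choice (Extensionality, Pairing, Union, Infinity, Regularity, Separation) plus: (FC) every set $X$ has a superset $Y$ such that every finite $x\subseteq Y$ belongs to $Y$; (TS) every set has a transitive superset; (MC) every set binary relation $A$ that is well-founded and extensional admits a transitive set $X$ and a bijection $\eta$ from its field onto $X$ with $jAk\iff\eta(j)\in\eta(k)$; (Count) every set admits an injection into $\omega$. A class-function is a class definable by an $\in$-formula (parameters allowed) that consists of ordered pairs and is functional. *)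

theory Defs
  imports Main
begin

section \<open>First-order language of set theory (deep embedding, de Bruijn indices)\<close>

datatype fm = Mem nat nat | Eq nat nat | Neg fm | Conj fm fm | Ex fm

text \<open>A structure is a type 'm (the universe) with a binary relation E (membership).
  Variable i is interpreted by env i; Ex binds variable 0 and shifts the others.\<close>

fun sat :: "('m \<Rightarrow> 'm \<Rightarrow> bool) \<Rightarrow> (nat \<Rightarrow> 'm) \<Rightarrow> fm \<Rightarrow> bool" where
  "sat E env (Mem i j) = E (env i) (env j)"
| "sat E env (Eq i j) = (env i = env j)"
| "sat E env (Neg p) = (\<not> sat E env p)"
| "sat E env (Conj p q) = (sat E env p \<and> sat E env q)"
| "sat E env (Ex p) = (\<exists>a. sat E (case_nat a env) p)"

section \<open>Internal (first-order definable) notions in a structure (UNIV::'m, E)\<close>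

definition isubset :: "('m \<Rightarrow> 'm \<Rightarrow> bool) \<Rightarrow> 'm \<Rightarrow> 'm \<Rightarrow> bool" where
  "isubset E x y \<longleftrightarrow> (\<forall>z. E z x \<longrightarrow> E z y)"

definition itrans :: "('m \<Rightarrow> 'm \<Rightarrow> bool) \<Rightarrow> 'm \<Rightarrow> bool" where
  "itrans E t \<longleftrightarrow> (\<forall>y z. E z y \<and> E y t \<longrightarrow> E z t)"

definition iupair :: "('m \<Rightarrow> 'm \<Rightarrow> bool) \<Rightarrow> 'm \<Rightarrow> 'm \<Rightarrow> 'm \<Rightarrow> bool" where
  "iupair E u a b \<longleftrightarrow> (\<forall>w. E w u \<longleftrightarrow> w = a \<or> w = b)"

definition iopair :: "('m \<Rightarrow> 'm \<Rightarrow> bool) \<Rightarrow> 'm \<Rightarrow> 'm \<Rightarrow> 'm \<Rightarrow> bool" where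
  "iopair E p a b \<longleftrightarrow> (\<forall>z. E z p \<longleftrightarrow> iupair E z a a \<or> iupair E z a b)"

definition iempty :: "('m \<Rightarrow> 'm \<Rightarrow> bool) \<Rightarrow> 'm \<Rightarrow> bool" where
  "iempty E e \<longleftrightarrow> (\<forall>z. \<not> E z e)"

definition isucc :: "('m \<Rightarrow> 'm \<Rightarrow> bool) \<Rightarrow> 'm \<Rightarrow> 'm \<Rightarrow> bool" where
  "isucc E s x \<longleftrightarrow> (\<forall>z. E z s \<longleftrightarrow> E z x \<or> z = x)"

definition iinductive :: "('m \<Rightarrow> 'm \<Rightarrow> bool) \<Rightarrow> 'm \<Rightarrow> bool" where
  "iinductive E I \<longleftrightarrow> (\<exists>e. iempty E e \<and> E e I) \<and> (\<forall>x. E x I \<longrightarrow> (\<exists>s. isucc E s x \<and> E s I))"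

definition inat :: "('m \<Rightarrow> 'm \<Rightarrow> bool) \<Rightarrow> 'm \<Rightarrow> bool" where
  "inat E n \<longleftrightarrow> (\<forall>I. iinductive E I \<longrightarrow> E n I)"

definition inrel :: "('m \<Rightarrow> 'm \<Rightarrow> bool) \<Rightarrow> 'm \<Rightarrow> 'm \<Rightarrow> 'm \<Rightarrow> bool" where
  "inrel E A a b \<longleftrightarrow> (\<exists>p. E p A \<and> iopair E p a b)"

definition irel :: "('m \<Rightarrow> 'm \<Rightarrow> bool) \<Rightarrow> 'm \<Rightarrow> bool" where
  "irel E A \<longleftrightarrow> (\<forall>p. E p A \<longrightarrow> (\<exists>a b. iopair E p a b))"

definition ifun :: "('m \<Rightarrow> 'm \<Rightarrow> bool) \<Rightarrow> 'm \<Rightarrow> bool" where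
  "ifun E f \<longleftrightarrow> irel E f \<and> (\<forall>a b c. inrel E f a b \<and> inrel E f a c \<longrightarrow> b = c)"

definition idom :: "('m \<Rightarrow> 'm \<Rightarrow> bool) \<Rightarrow> 'm \<Rightarrow> 'm \<Rightarrow> bool" where
  "idom E f d \<longleftrightarrow> (\<forall>a. E a d \<longleftrightarrow> (\<exists>b. inrel E f a b))"

definition iran :: "('m \<Rightarrow> 'm \<Rightarrow> bool) \<Rightarrow> 'm \<Rightarrow> 'm \<Rightarrow> bool" where
  "iran E f r \<longleftrightarrow> (\<forall>b. E b r \<longleftrightarrow> (\<exists>a. inrel E f a b))"

definition iinj :: "('m \<Rightarrow> 'm \<Rightarrow> bool) \<Rightarrow> 'm \<Rightarrow> bool" where
  "iinj E f \<longleftrightarrow> (\<forall>a a' b. inrel E f a b \<and> inrel E f a' b \<longrightarrow> a = a')"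

definition ibij :: "('m \<Rightarrow> 'm \<Rightarrow> bool) \<Rightarrow> 'm \<Rightarrow> 'm \<Rightarrow> 'm \<Rightarrow> bool" where
  "ibij E f X Y \<longleftrightarrow> ifun E f \<and> idom E f X \<and> iran E f Y \<and> iinj E f"

definition ifinite :: "('m \<Rightarrow> 'm \<Rightarrow> bool) \<Rightarrow> 'm \<Rightarrow> bool" where
  "ifinite E x \<longleftrightarrow> (\<exists>n f. inat E n \<and> ibij E f n x)"

definition ifld :: "('m \<Rightarrow> 'm \<Rightarrow> bool) \<Rightarrow> 'm \<Rightarrow> 'm \<Rightarrow> bool" where
  "ifld E A x \<longleftrightarrow> (\<exists>y. inrel E A x y \<or> inrel E A y x)"

definition iwf :: "('m \<Rightarrow> 'm \<Rightarrow> bool) \<Rightarrow> 'm \<Rightarrow> bool" where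
  "iwf E A \<longleftrightarrow> (\<forall>S. (\<exists>x. E x S) \<and> (\<forall>x. E x S \<longrightarrow> ifld E A x) \<longrightarrow>
      (\<exists>m. E m S \<and> \<not> (\<exists>i. E i S \<and> inrel E A i m)))"

definition iextensional :: "('m \<Rightarrow> 'm \<Rightarrow> bool) \<Rightarrow> 'm \<Rightarrow> bool" where
  "iextensional E A \<longleftrightarrow> (\<forall>j k. ifld E A j \<and> ifld E A k \<and> (\<forall>i. inrel E A i j \<longleftrightarrow> inrel E A i k) \<longrightarrow> j = k)"

section \<open>The axioms of Z^-_FTM\<omega>\<close>

definition ax_ext :: "('m \<Rightarrow> 'm \<Rightarrow> bool) \<Rightarrow> bool" where
  "ax_ext E \<longleftrightarrow> (\<forall>x y. (\<forall>z. E z x \<longleftrightarrow> E z y) \<longrightarrow> x = y)"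

definition ax_pair :: "('m \<Rightarrow> 'm \<Rightarrow> bool) \<Rightarrow> bool" where
  "ax_pair E \<longleftrightarrow> (\<forall>a b. \<exists>c. iupair E c a b)"

definition ax_union :: "('m \<Rightarrow> 'm \<Rightarrow> bool) \<Rightarrow> bool" where
  "ax_union E \<longleftrightarrow> (\<forall>a. \<exists>u. \<forall>z. E z u \<longleftrightarrow> (\<exists>y. E z y \<and> E y a))"

definition ax_inf :: "('m \<Rightarrow> 'm \<Rightarrow> bool) \<Rightarrow> bool" where
  "ax_inf E \<longleftrightarrow> (\<exists>I. iinductive E I)"

definition ax_reg :: "('m \<Rightarrow> 'm \<Rightarrow> bool) \<Rightarrow> bool" where
  "ax_reg E \<longleftrightarrow> (\<forall>x. (\<exists>y. E y x) \<longrightarrow> (\<exists>y. E y x \<and> \<not> (\<exists>z. E z y \<and> E z x)))"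

text \<open>Separation scheme, with arbitrary parameters (env); variable 0 is the separated variable\<close>
definition ax_sep :: "('m \<Rightarrow> 'm \<Rightarrow> bool) \<Rightarrow> bool" where
  "ax_sep E \<longleftrightarrow> (\<forall>\<phi> env a. \<exists>b. \<forall>z. E z b \<longleftrightarrow> E z a \<and> sat E (case_nat z env) \<phi>)"

definition ax_FC :: "('m \<Rightarrow> 'm \<Rightarrow> bool) \<Rightarrow> bool" where
  "ax_FC E \<longleftrightarrow> (\<forall>X. \<exists>Y. isubset E X Y \<and> (\<forall>x. isubset E x Y \<and> ifinite E x \<longrightarrow> E x Y))"

definition ax_TS :: "('m \<Rightarrow> 'm \<Rightarrow> bool) \<Rightarrow> bool" where
  "ax_TS E \<longleftrightarrow> (\<forall>x. \<exists>t. isubset E x t \<and> itrans E t)"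

definition ax_MC :: "('m \<Rightarrow> 'm \<Rightarrow> bool) \<Rightarrow> bool" where
  "ax_MC E \<longleftrightarrow> (\<forall>A. irel E A \<and> iwf E A \<and> iextensional E A \<longrightarrow>
      (\<exists>Fd X \<eta>. (\<forall>x. E x Fd \<longleftrightarrow> ifld E A x) \<and> itrans E X \<and> ibij E \<eta> Fd X \<and>
         (\<forall>j k a b. inrel E \<eta> j a \<and> inrel E \<eta> k b \<longrightarrow> (inrel E A j k \<longleftrightarrow> E a b))))"

definition ax_count :: "('m \<Rightarrow> 'm \<Rightarrow> bool) \<Rightarrow> bool" where
  "ax_count E \<longleftrightarrow> (\<forall>x. \<exists>f. ifun E f \<and> idom E f x \<and> iinj E f \<and> (\<forall>a b. inrel E f a b \<longrightarrow> inat E b))"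

definition ZFTM :: "('m \<Rightarrow> 'm \<Rightarrow> bool) \<Rightarrow> bool" where
  "ZFTM E \<longleftrightarrow> ax_ext E \<and> ax_pair E \<and> ax_union E \<and> ax_inf E \<and> ax_reg E \<and> ax_sep E
     \<and> ax_FC E \<and> ax_TS E \<and> ax_MC E \<and> ax_count E"

section \<open>Classes and class-functions\<close>

text \<open>The class defined by formula \<phi> (free variable 0) with parameters env\<close>
definition cls :: "('m \<Rightarrow> 'm \<Rightarrow> bool) \<Rightarrow> fm \<Rightarrow> (nat \<Rightarrow> 'm) \<Rightarrow> 'm \<Rightarrow> bool" where
  "cls E \<phi> env z \<longleftrightarrow> sat E (case_nat z env) \<phi>"

definition is_class_fun :: "('m \<Rightarrow> 'm \<Rightarrow> bool) \<Rightarrow> fm \<Rightarrow> (nat \<Rightarrow> 'm) \<Rightarrow> bool" where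
  "is_class_fun E \<phi> env \<longleftrightarrow>
     (\<forall>z. cls E \<phi> env z \<longrightarrow> (\<exists>a b. iopair E z a b)) \<and>
     (\<forall>p q a b c. cls E \<phi> env p \<and> cls E \<phi> env q \<and> iopair E p a b \<and> iopair E q a c \<longrightarrow> b = c)"

definition cf_app :: "('m \<Rightarrow> 'm \<Rightarrow> bool) \<Rightarrow> fm \<Rightarrow> (nat \<Rightarrow> 'm) \<Rightarrow> 'm \<Rightarrow> 'm \<Rightarrow> bool" where
  "cf_app E \<phi> env x y \<longleftrightarrow> (\<exists>p. iopair E p x y \<and> cls E \<phi> env p)"

definition cf_dom :: "('m \<Rightarrow> 'm \<Rightarrow> bool) \<Rightarrow> fm \<Rightarrow> (nat \<Rightarrow> 'm) \<Rightarrow> 'm \<Rightarrow> bool" where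
  "cf_dom E \<phi> env x \<longleftrightarrow> (\<exists>y. cf_app E \<phi> env x y)"

definition cf_ran :: "('m \<Rightarrow> 'm \<Rightarrow> bool) \<Rightarrow> fm \<Rightarrow> (nat \<Rightarrow> 'm) \<Rightarrow> 'm \<Rightarrow> bool" where
  "cf_ran E \<phi> env y \<longleftrightarrow> (\<exists>x. cf_app E \<phi> env x y)"

definition is_set :: "('m \<Rightarrow> 'm \<Rightarrow> bool) \<Rightarrow> ('m \<Rightarrow> bool) \<Rightarrow> bool" where
  "is_set E C \<longleftrightarrow> (\<exists>s. \<forall>z. E z s \<longleftrightarrow> C z)"

end

theory Submission
  imports Defs
begin


fun ren :: "(nat \<Rightarrow> nat) \<Rightarrow> fm \<Rightarrow> fm" where
  "ren g (Mem i j) = Mem (g i) (g j)"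
| "ren g (Eq i j) = Eq (g i) (g j)"
| "ren g (Neg p) = Neg (ren g p)"
| "ren g (Conj p q) = Conj (ren g p) (ren g q)"
| "ren g (Ex p) = Ex (ren (case_nat 0 (Suc \<circ> g)) p)"

lemma sat_ren: "sat E env (ren g p) = sat E (env \<circ> g) p"
proof (induction p arbitrary: env g)
  case (Ex p)
  have h: "\<And>a. case_nat a env \<circ> case_nat 0 (Suc \<circ> g) = case_nat a (env \<circ> g)"
    by (rule ext) (simp split: nat.split)
  show ?case by (simp only: ren.simps sat.simps Ex.IH h)
qed auto

definition mrg :: "(nat \<Rightarrow> 'm) \<Rightarrow> (nat \<Rightarrow> 'm) \<Rightarrow> nat \<Rightarrow> 'm" where
  "mrg e r n = (if even n then e (n div 2) else r (n div 2))"

definition defn :: "('m \<Rightarrow> 'm \<Rightarrow> bool) \<Rightarrow> ((nat \<Rightarrow> 'm) \<Rightarrow> bool) \<Rightarrow> bool" where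
  "defn E P \<longleftrightarrow> (\<exists>\<psi> r. \<forall>e. sat E (mrg e r) \<psi> = P e)"

lemma defn_mem_vv: "defn E (\<lambda>e. E (e i) (e j))"
  unfolding defn_def
  by (rule exI[of _ "Mem (2*i) (2*j)"]) (simp add: mrg_def)

lemma defn_mem_vc: "defn E (\<lambda>e. E (e i) c)"
  unfolding defn_def
  by (rule exI[of _ "Mem (2*i) 1"], rule exI[of _ "\<lambda>_. c"]) (simp add: mrg_def)

lemma defn_mem_cv: "defn E (\<lambda>e. E c (e i))"
  unfolding defn_def
  by (rule exI[of _ "Mem 1 (2*i)"], rule exI[of _ "\<lambda>_. c"]) (simp add: mrg_def)

lemma defn_eq_vv: "defn E (\<lambda>e. e i = e j)"
  unfolding defn_def
  by (rule exI[of _ "Eq (2*i) (2*j)"]) (simp add: mrg_def)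

lemma defn_eq_vc: "defn E (\<lambda>e. e i = c)"
  unfolding defn_def
  by (rule exI[of _ "Eq (2*i) 1"], rule exI[of _ "\<lambda>_. c"]) (simp add: mrg_def)

lemma defn_eq_cv: "defn E (\<lambda>e. c = e i)"
  unfolding defn_def
  by (rule exI[of _ "Eq 1 (2*i)"], rule exI[of _ "\<lambda>_. c"]) (simp add: mrg_def)

lemma defn_const: "defn E (\<lambda>e. b)"
  unfolding defn_def
  by (rule exI[of _ "if b then Eq 0 0 else Neg (Eq 0 0)"]) simp

lemma defn_cls: "defn E (\<lambda>e. cls E \<phi> env (e i))"
proof -
  have "\<And>e. mrg e env \<circ> case_nat (2*i) (\<lambda>n. 2*n+1) = case_nat (e i) env"
    by (rule ext) (simp add: mrg_def split: nat.split)
  then show ?thesis unfolding defn_def cls_def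
    by (intro exI[of _ "ren (case_nat (2*i) (\<lambda>n. 2*n+1)) \<phi>"] exI[of _ env]) (simp add: sat_ren)
qed

lemma defn_neg: "defn E P \<Longrightarrow> defn E (\<lambda>e. \<not> P e)"
proof -
  assume "defn E P"
  then obtain p r where "\<And>e. sat E (mrg e r) p = P e" unfolding defn_def by blast
  then have "\<forall>e. sat E (mrg e r) (Neg p) = (\<not> P e)" by simp
  then show ?thesis unfolding defn_def by blast
qed

lemma defn_conj: assumes "defn E P" "defn E Q" shows "defn E (\<lambda>e. P e \<and> Q e)"
proof -
  obtain p r where p: "\<And>e. sat E (mrg e r) p = P e" using assms(1) unfolding defn_def by blast
  obtain q s where q: "\<And>e. sat E (mrg e s) q = Q e" using assms(2) unfolding defn_def by blast
  define t where "t = (\<lambda>n. if even n then r (n div 2) else s (n div 2))"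
  define g1 where "g1 = (\<lambda>n::nat. if even n then n else 2*n - 1)"
  define g2 where "g2 = (\<lambda>n::nat. if even n then n else 2*n + 1)"
  have 1: "\<And>e. mrg e t \<circ> g1 = mrg e r"
  proof (rule ext)
    fix e n show "(mrg e t \<circ> g1) n = mrg e r n"
    proof (cases "even n")
      case True then show ?thesis by (simp add: mrg_def g1_def)
    next
      case False
      then obtain k where "n = 2*k+1" by (metis oddE)
      then show ?thesis by (simp add: mrg_def g1_def t_def)
    qed
  qed
  have 2: "\<And>e. mrg e t \<circ> g2 = mrg e s"
  proof (rule ext)
    fix e n show "(mrg e t \<circ> g2) n = mrg e s n"
    proof (cases "even n")
      case True then show ?thesis by (simp add: mrg_def g2_def)
    next
      case False
      then obtain k where "n = 2*k+1" by (metis oddE)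
      then show ?thesis by (simp add: mrg_def g2_def t_def)
    qed
  qed
  show ?thesis unfolding defn_def
    by (rule exI[of _ "Conj (ren g1 p) (ren g2 q)"], rule exI[of _ t]) (simp add: sat_ren 1 2 p q)
qed

lemma defn_ex: fixes E :: "'m \<Rightarrow> 'm \<Rightarrow> bool" and Q :: "(nat \<Rightarrow> 'm) \<Rightarrow> 'm \<Rightarrow> bool"
  assumes "defn E (\<lambda>e. Q (\<lambda>n. e (Suc n)) (e 0))" shows "defn E (\<lambda>e. \<exists>a. Q e a)"
proof -
  obtain p r where p: "\<And>e. sat E (mrg e r) p = Q (\<lambda>n. e (Suc n)) (e 0)" using assms unfolding defn_def by blast
  define g where "g = (\<lambda>n::nat. if n = 0 then 0 else if even n then n - 1 else n + 1)"
  have 1: "\<And>e a. case_nat a (mrg e r) \<circ> g = mrg (case_nat a e) r"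
  proof (rule ext)
    fix e a n show "(case_nat a (mrg e r) \<circ> g) n = mrg (case_nat a e) r n"
    proof (cases "n = 0")
      case True then show ?thesis by (simp add: mrg_def g_def)
    next
      case n0: False
      show ?thesis
      proof (cases "even n")
        case True
        then obtain k0 where k0: "n = 2*k0" by blast
        with n0 obtain k where "n = 2*k+2" by (cases k0) auto
        then show ?thesis by (simp add: mrg_def g_def)
      next
        case False
        then obtain k where "n = 2*k+1" by (metis oddE)
        then show ?thesis by (simp add: mrg_def g_def)
      qed
    qed
  qed
  have "\<And>e. (\<exists>a. Q e a) = (\<exists>a. sat E (mrg (case_nat a e) r) p)"
  proof -
    fix e :: "nat \<Rightarrow> 'm"
    have "\<And>a. (\<lambda>n. case_nat a e (Suc n)) = e" by simp
    then show "(\<exists>a. Q e a) = (\<exists>a. sat E (mrg (case_nat a e) r) p)" by (simp add: p)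
  qed
  then show ?thesis unfolding defn_def
    by (intro exI[of _ "Ex (ren g p)"] exI[of _ r]) (simp add: sat_ren 1)
qed

lemma defn_disj: "defn E P \<Longrightarrow> defn E Q \<Longrightarrow> defn E (\<lambda>e. P e \<or> Q e)"
proof -
  assume a: "defn E P" "defn E Q"
  have "defn E (\<lambda>e. \<not> (\<not> P e \<and> \<not> Q e))" by (intro defn_neg defn_conj a)
  then show ?thesis by simp
qed

lemma defn_imp: "defn E P \<Longrightarrow> defn E Q \<Longrightarrow> defn E (\<lambda>e. P e \<longrightarrow> Q e)"
proof -
  assume a: "defn E P" "defn E Q"
  have "defn E (\<lambda>e. \<not> (P e \<and> \<not> Q e))" by (intro defn_neg defn_conj a)
  then show ?thesis by simp
qed

lemma defn_iff: "defn E P \<Longrightarrow> defn E Q \<Longrightarrow> defn E (\<lambda>e. P e \<longleftrightarrow> Q e)"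
proof -
  assume a: "defn E P" "defn E Q"
  have "defn E (\<lambda>e. (P e \<longrightarrow> Q e) \<and> (Q e \<longrightarrow> P e))" by (intro defn_conj defn_imp a)
  moreover have "(\<lambda>e. (P e \<longrightarrow> Q e) \<and> (Q e \<longrightarrow> P e)) = (\<lambda>e. P e \<longleftrightarrow> Q e)" by auto
  ultimately show ?thesis by simp
qed

lemma defn_all: fixes E :: "'m \<Rightarrow> 'm \<Rightarrow> bool" and Q :: "(nat \<Rightarrow> 'm) \<Rightarrow> 'm \<Rightarrow> bool"
  assumes "defn E (\<lambda>e. Q (\<lambda>n. e (Suc n)) (e 0))" shows "defn E (\<lambda>e. \<forall>a. Q e a)"
proof -
  have "defn E (\<lambda>e. \<not> (\<exists>a. \<not> Q e a))"
    by (intro defn_neg defn_ex) (rule assms)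
  then show ?thesis by simp
qed

lemmas defn_intros = defn_conj defn_disj defn_imp defn_iff defn_neg defn_ex defn_all
  defn_mem_vv defn_mem_vc defn_mem_cv defn_eq_vv defn_eq_vc defn_eq_cv defn_cls defn_const

lemma sepD: assumes "ax_sep E" "defn E (\<lambda>e. P (e 0))" shows "\<exists>b. \<forall>z. E z b \<longleftrightarrow> E z a \<and> P z"
proof -
  obtain p r where p: "\<And>e. sat E (mrg e r) p = P (e 0)" using assms(2) unfolding defn_def by blast
  define g where "g = (\<lambda>n::nat. if even n then 0 else n div 2 + 1)"
  have "\<And>z. case_nat z r \<circ> g = mrg (\<lambda>_. z) r"
    by (rule ext) (simp add: g_def mrg_def)
  then have "\<And>z. sat E (case_nat z r) (ren g p) = P z" by (simp add: sat_ren p)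
  moreover obtain b where "\<forall>z. E z b \<longleftrightarrow> E z a \<and> sat E (case_nat z r) (ren g p)"
    using assms(1) unfolding ax_sep_def by blast
  ultimately show ?thesis by auto
qed



locale zf = fixes E :: "'m \<Rightarrow> 'm \<Rightarrow> bool" assumes Z: "ZFTM E"
begin

lemma extE: "(\<And>z. E z x \<longleftrightarrow> E z y) \<Longrightarrow> x = y"
  using Z unfolding ZFTM_def ax_ext_def by blast

lemma sep: "defn E (\<lambda>e. P (e 0)) \<Longrightarrow> \<exists>b. \<forall>z. E z b \<longleftrightarrow> E z a \<and> P z"
proof -
  have "ax_sep E" using Z unfolding ZFTM_def by simp
  then show "defn E (\<lambda>e. P (e 0)) \<Longrightarrow> \<exists>b. \<forall>z. E z b \<longleftrightarrow> E z a \<and> P z" by (rule sepD)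
qed

definition up where "up a b = (THE u. iupair E u a b)"

lemma up_mem[simp]: "E w (up a b) \<longleftrightarrow> w = a \<or> w = b"
proof -
  have "\<exists>!u. iupair E u a b"
  proof -
    obtain u where "iupair E u a b" using Z unfolding ZFTM_def ax_pair_def by blast
    moreover have "\<And>v. iupair E v a b \<Longrightarrow> v = u"
      using calculation by (intro extE) (simp add: iupair_def)
    ultimately show ?thesis by blast
  qed
  then have "iupair E (up a b) a b" unfolding up_def by (rule theI')
  then show ?thesis unfolding iupair_def by blast
qed

lemma iupair_iff: "iupair E u a b \<longleftrightarrow> u = up a b"
proof
  assume "iupair E u a b" then show "u = up a b" by (intro extE) (simp add: iupair_def)
qed (simp add: iupair_def)

definition op where "op a b = up (up a a) (up a b)"

lemma iopair_iff: "iopair E p a b \<longleftrightarrow> p = op a b"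
proof
  assume "iopair E p a b" then show "p = op a b" unfolding op_def
    by (intro extE) (simp add: iopair_def iupair_iff)
qed (simp add: iopair_def iupair_iff op_def)

lemma iopair_op: "iopair E (op a b) a b" by (simp add: iopair_iff)

lemma up_eq: "up a b = up c d \<longleftrightarrow> (a = c \<and> b = d) \<or> (a = d \<and> b = c)"
proof
  assume h: "up a b = up c d"
  have "\<forall>w. (w = a \<or> w = b) \<longleftrightarrow> (w = c \<or> w = d)"
  proof
    fix w have "E w (up a b) \<longleftrightarrow> E w (up c d)" using h by simp
    then show "(w = a \<or> w = b) \<longleftrightarrow> (w = c \<or> w = d)" by simp
  qed
  then have "a = c \<or> a = d" "b = c \<or> b = d" "c = a \<or> c = b" "d = a \<or> d = b"
    by (metis (full_types))+
  then show "(a = c \<and> b = d) \<or> (a = d \<and> b = c)" by auto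
next
  assume h: "(a = c \<and> b = d) \<or> (a = d \<and> b = c)"
  show "up a b = up c d"
  proof (rule extE)
    fix z show "E z (up a b) \<longleftrightarrow> E z (up c d)" using h by auto
  qed
qed

lemma up_eqD: "up a b = up c d \<Longrightarrow> (a = c \<and> b = d) \<or> (a = d \<and> b = c)"
  using up_eq by blast

lemma op_inj: "op a b = op c d \<longleftrightarrow> a = c \<and> b = d"
proof
  assume h: "op a b = op c d"
  have 1: "(up a a = up c c \<and> up a b = up c d) \<or> (up a a = up c d \<and> up a b = up c c)"
    using h unfolding op_def by (rule up_eqD)
  show "a = c \<and> b = d"
  proof (cases "up a a = up c c \<and> up a b = up c d")
    case True
    then have "a = c" using up_eqD by blast
    moreover have "(a = c \<and> b = d) \<or> (a = d \<and> b = c)" using True up_eqD by blast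
    ultimately show ?thesis by blast
  next
    case False
    then have 2: "up a a = up c d" "up a b = up c c" using 1 by blast+
    have "a = c \<and> a = d" using up_eqD[OF 2(1)] by blast
    moreover have "a = c \<and> b = c" using up_eqD[OF 2(2)] by blast
    ultimately show ?thesis by blast
  qed
qed simp

lemma inrel_iff: "inrel E A a b \<longleftrightarrow> E (op a b) A"
  unfolding inrel_def iopair_iff by auto

definition uni where "uni a = (THE u. \<forall>z. E z u \<longleftrightarrow> (\<exists>y. E z y \<and> E y a))"

lemma uni_mem[simp]: "E z (uni a) \<longleftrightarrow> (\<exists>y. E z y \<and> E y a)"
proof -
  have "\<exists>!u. \<forall>z. E z u \<longleftrightarrow> (\<exists>y. E z y \<and> E y a)"
  proof -
    obtain u where "\<forall>z. E z u \<longleftrightarrow> (\<exists>y. E z y \<and> E y a)" using Z unfolding ZFTM_def ax_union_def by blast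
    moreover have "\<And>v. \<forall>z. E z v \<longleftrightarrow> (\<exists>y. E z y \<and> E y a) \<Longrightarrow> v = u"
      using calculation by (intro extE) simp
    ultimately show ?thesis by (intro ex1I)
  qed
  from theI'[OF this] have "\<forall>z. E z (uni a) \<longleftrightarrow> (\<exists>y. E z y \<and> E y a)" unfolding uni_def .
  then show ?thesis by blast
qed

definition un where "un a b = uni (up a b)"

lemma un_mem[simp]: "E z (un a b) \<longleftrightarrow> E z a \<or> E z b"
  unfolding un_def by auto

definition emp where "emp = (THE u. \<forall>z. \<not> E z u)"

lemma emp_mem[simp]: "\<not> E z emp"
proof -
  have "\<exists>!u. \<forall>z. \<not> E z u"
  proof -
    obtain u where u: "\<forall>z. E z u \<longleftrightarrow> E z u0 \<and> False"
      using sep[of "\<lambda>_. False" u0, OF defn_const] by blast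
    then have "\<forall>z. \<not> E z u" by simp
    moreover have "\<And>v. \<forall>z. \<not> E z v \<Longrightarrow> v = u"
      using calculation by (intro extE) simp
    ultimately show ?thesis by (intro ex1I)
  qed
  from theI'[OF this] have "\<forall>z. \<not> E z emp" unfolding emp_def .
  then show ?thesis by blast
qed

lemma iempty_iff: "iempty E e \<longleftrightarrow> e = emp"
  unfolding iempty_def
proof
  assume h: "\<forall>z. \<not> E z e"
  show "e = emp" by (rule extE) (simp add: h)
qed simp

definition sc where "sc x = un x (up x x)"

lemma sc_mem[simp]: "E z (sc x) \<longleftrightarrow> E z x \<or> z = x"
  unfolding sc_def by auto

lemma isucc_iff: "isucc E s x \<longleftrightarrow> s = sc x"
  unfolding isucc_def
proof
  assume h: "\<forall>z. E z s \<longleftrightarrow> E z x \<or> z = x"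
  show "s = sc x" by (rule extE) (simp add: h)
qed simp

lemma iinductive_iff: "iinductive E I \<longleftrightarrow> E emp I \<and> (\<forall>x. E x I \<longrightarrow> E (sc x) I)"
  unfolding iinductive_def iempty_iff isucc_iff by auto

lemma inat_emp: "inat E emp"
  unfolding inat_def iinductive_iff by auto

lemma inat_sc: "inat E x \<Longrightarrow> inat E (sc x)"
  unfolding inat_def iinductive_iff by auto

lemma reg: "E y x \<Longrightarrow> \<exists>y. E y x \<and> \<not> (\<exists>z. E z y \<and> E z x)"
  using Z unfolding ZFTM_def ax_reg_def by blast

lemma mem_irrefl: "\<not> E x x"
proof
  assume h: "E x x"
  obtain y where "E y (up x x)" "\<not> (\<exists>z. E z y \<and> E z (up x x))"
    using reg[of x "up x x"] by auto
  then show False using h by auto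
qed

lemma TS: "\<exists>t. isubset E x t \<and> itrans E t"
  using Z unfolding ZFTM_def ax_TS_def by blast

lemma FC: "\<exists>Y. isubset E X Y \<and> (\<forall>x. isubset E x Y \<and> ifinite E x \<longrightarrow> E x Y)"
  using Z unfolding ZFTM_def ax_FC_def by blast

definition one where "one = sc emp"
definition two where "two = sc one"

lemma one_mem[simp]: "E z one \<longleftrightarrow> z = emp" unfolding one_def by simp
lemma two_mem[simp]: "E z two \<longleftrightarrow> z = emp \<or> z = one" unfolding two_def by simp
lemma emp_ne_one: "emp \<noteq> one"
proof
  assume "emp = one" then have "E emp emp" using one_mem by metis
  then show False by simp
qed

lemma finite_up: "ifinite E (up a b)"
proof (cases "a = b")
  case True
  define f where "f = up (op emp a) (op emp a)"
  have ir: "\<And>u v. inrel E f u v \<longleftrightarrow> u = emp \<and> v = a"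
    unfolding inrel_iff f_def by (auto simp: op_inj)
  have fm: "\<And>p. E p f \<longleftrightarrow> p = op emp a" by (simp add: f_def)
  have "irel E f" unfolding irel_def fm using iopair_op by blast
  then have "ibij E f one (up a b)"
    unfolding ibij_def ifun_def idom_def iran_def iinj_def
    by (auto simp: ir True iopair_iff fm op_inj)
  moreover have "inat E one" unfolding one_def by (intro inat_sc inat_emp)
  ultimately show ?thesis unfolding ifinite_def by blast
next
  case False
  define f where "f = up (op emp a) (op one b)"
  have ir: "\<And>u v. inrel E f u v \<longleftrightarrow> (u = emp \<and> v = a) \<or> (u = one \<and> v = b)"
    unfolding inrel_iff f_def by (auto simp: op_inj)
  have fm: "\<And>p. E p f \<longleftrightarrow> p = op emp a \<or> p = op one b" by (simp add: f_def)
  have "irel E f" unfolding irel_def fm using iopair_op by blast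
  then have "ibij E f two (up a b)"
    unfolding ibij_def ifun_def idom_def iran_def iinj_def
    using False emp_ne_one by (auto simp: ir iopair_iff fm op_inj)
  moreover have "inat E two" unfolding two_def one_def by (intro inat_sc inat_emp)
  ultimately show ?thesis unfolding ifinite_def by blast
qed

lemma prod_sup: "\<exists>P. \<forall>a b. E a X \<and> E b X \<longrightarrow> E (op a b) P"
proof -
  obtain Y1 where Y1: "isubset E X Y1" "\<And>x. isubset E x Y1 \<Longrightarrow> ifinite E x \<Longrightarrow> E x Y1"
    using FC[of X] by blast
  obtain Y2 where Y2: "isubset E Y1 Y2" "\<And>x. isubset E x Y2 \<Longrightarrow> ifinite E x \<Longrightarrow> E x Y2"
    using FC[of Y1] by blast
  have "E (op a b) Y2" if "E a X" "E b X" for a b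
  proof -
    have "E (up a a) Y1" "E (up a b) Y1"
      using that Y1 by (auto intro!: Y1(2) finite_up simp: isubset_def)
    then show ?thesis unfolding op_def
      using Y2 by (auto intro!: Y2(2) finite_up simp: isubset_def)
  qed
  then show ?thesis by blast
qed


lemma nat_ind:
  assumes d: "defn E (\<lambda>e. P (e 0))" and b: "P emp" and st: "\<And>x. P x \<Longrightarrow> P (sc x)"
    and n: "inat E n"
  shows "P n"
proof -
  obtain I where I: "iinductive E I" using Z unfolding ZFTM_def ax_inf_def by blast
  obtain J where J: "\<forall>z. E z J \<longleftrightarrow> E z I \<and> P z" using sep[OF d] by blast
  have "iinductive E J" using I J b st unfolding iinductive_iff by blast
  then show ?thesis using n J unfolding inat_def by blast
qed

definition Rp where "Rp m \<longleftrightarrow> (\<forall>k. itrans E k \<and> isubset E k m \<longrightarrow> E k m \<or> k = m)"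

lemma Rp_nat: assumes "inat E m" shows "Rp m"
proof (rule nat_ind[where P = Rp, OF _ _ _ assms])
  show "defn E (\<lambda>e. Rp (e 0))" unfolding Rp_def itrans_def isubset_def by (intro defn_intros)
next
  show "Rp emp" unfolding Rp_def isubset_def
  proof (intro allI impI disjI2)
    fix k assume "itrans E k \<and> (\<forall>z. E z k \<longrightarrow> E z emp)"
    then show "k = emp" by (intro extE) auto
  qed
next
  fix m assume IH: "Rp m"
  show "Rp (sc m)" unfolding Rp_def
  proof (intro allI impI)
    fix k assume k: "itrans E k \<and> isubset E k (sc m)"
    show "E k (sc m) \<or> k = sc m"
    proof (cases "E m k")
      case True
      then have "\<And>z. E z m \<Longrightarrow> E z k" using k unfolding itrans_def by blast
      then have "k = sc m" using k True unfolding isubset_def by (intro extE) auto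
      then show ?thesis by simp
    next
      case False
      then have "isubset E k m" using k unfolding isubset_def by auto
      then have "E k m \<or> k = m" using IH k unfolding Rp_def by blast
      then show ?thesis by auto
    qed
  qed
qed

definition Qp where "Qp n \<longleftrightarrow> itrans E n \<and> (\<forall>m. Rp m \<longrightarrow> E m n \<or> isubset E n m)"

lemma Qp_nat: assumes "inat E n" shows "Qp n"
proof (rule nat_ind[where P = Qp, OF _ _ _ assms])
  show "defn E (\<lambda>e. Qp (e 0))" unfolding Qp_def Rp_def itrans_def isubset_def by (intro defn_intros)
next
  show "Qp emp" unfolding Qp_def itrans_def isubset_def by simp
next
  fix n assume IH: "Qp n"
  have tr: "itrans E (sc n)" using IH unfolding Qp_def itrans_def by auto
  have "E m (sc n) \<or> isubset E (sc n) m" if Rm: "Rp m" for m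
  proof -
    have "E m n \<or> isubset E n m" using IH Rm unfolding Qp_def by blast
    then show ?thesis
    proof
      assume "E m n" then show ?thesis by simp
    next
      assume sub: "isubset E n m"
      show ?thesis
      proof (cases "n = m")
        case True then show ?thesis by simp
      next
        case False
        then have "E n m" using Rm sub IH unfolding Rp_def Qp_def by blast
        then have "isubset E (sc n) m" using sub unfolding isubset_def by auto
        then show ?thesis by simp
      qed
    qed
  qed
  then show "Qp (sc n)" using tr unfolding Qp_def by blast
qed

lemma nat_lin: "inat E n \<Longrightarrow> inat E m \<Longrightarrow> E m n \<or> isubset E n m"
  using Qp_nat Rp_nat unfolding Qp_def by blast


lemma count: "\<exists>f. ifun E f \<and> idom E f x \<and> iinj E f \<and> (\<forall>a b. inrel E f a b \<longrightarrow> inat E b)"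
  using Z unfolding ZFTM_def ax_count_def by blast

lemma MC: "irel E A \<Longrightarrow> iwf E A \<Longrightarrow> iextensional E A \<Longrightarrow>
      (\<exists>Fd X \<eta>. (\<forall>x. E x Fd \<longleftrightarrow> ifld E A x) \<and> itrans E X \<and> ibij E \<eta> Fd X \<and>
         (\<forall>j k a b. inrel E \<eta> j a \<and> inrel E \<eta> k b \<longrightarrow> (inrel E A j k \<longleftrightarrow> E a b)))"
  using Z unfolding ZFTM_def ax_MC_def by blast

lemma main:
  fixes \<phi> env D T
  defines "app \<equiv> cf_app E \<phi> env"
  assumes fn: "\<And>x y y'. app x y \<Longrightarrow> app x y' \<Longrightarrow> y = y'"
    and D: "\<And>x. E x D \<longleftrightarrow> (\<exists>y. app x y)"
    and T: "itrans E T"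
    and cover: "\<And>x y z. app x y \<Longrightarrow> E z y \<Longrightarrow> E z T \<or> (\<exists>x'. app x' z)"
  shows "\<exists>Rs. \<forall>z. E z Rs \<longleftrightarrow> (\<exists>x. app x z)"
proof -
  obtain f where f: "ifun E f" "idom E f D" "iinj E f" "\<And>a b. inrel E f a b \<Longrightarrow> inat E b"
    using count[of D] by blast
  have cf_fun: "\<And>a b b'. inrel E f a b \<Longrightarrow> inrel E f a b' \<Longrightarrow> b = b'"
    using f(1) unfolding ifun_def by blast
  have cf_tot: "\<And>a. E a D \<Longrightarrow> \<exists>b. inrel E f a b"
    using f(2) unfolding idom_def by blast
  have cf_inj: "\<And>a a' b. inrel E f a b \<Longrightarrow> inrel E f a' b \<Longrightarrow> a = a'"
    using f(3) unfolding iinj_def by blast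
  define U where "U = uni (uni f)"
  have in_U: "\<And>a b. inrel E f a b \<Longrightarrow> E b U"
  proof -
    fix a b assume "inrel E f a b"
    then have 1: "E (op a b) f" by (simp add: inrel_iff)
    have 2: "E (up a b) (op a b)" by (simp add: op_def)
    have 3: "E b (up a b)" by simp
    show "E b U" unfolding U_def uni_mem using 1 2 3 by blast
  qed
  have "\<exists>b. \<forall>x. E x b \<longleftrightarrow> E x D \<and> (\<exists>y. app x y \<and> \<not> E y T \<and>
          (\<forall>x' n n'. app x' y \<and> inrel E f x n \<and> inrel E f x' n' \<longrightarrow> isubset E n n'))"
    by (rule sep) (unfold app_def cf_app_def inrel_def iopair_def iupair_def isubset_def, intro defn_intros)
  then obtain D' where D': "\<And>x. E x D' \<longleftrightarrow> E x D \<and> (\<exists>y. app x y \<and> \<not> E y T \<and>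
          (\<forall>x' n n'. app x' y \<and> inrel E f x n \<and> inrel E f x' n' \<longrightarrow> isubset E n n'))"
    by blast
  have D'D: "E x D" if "E x D'" for x using iffD1[OF D' that] by (rule conjunct1)
  have D'_val: "\<exists>y. app x y \<and> \<not> E y T" if "E x D'" for x using iffD1[OF D' that] by blast
  have D'_min: "isubset E n n'" if h: "E x D'" "app x y" "app x' y" "inrel E f x n" "inrel E f x' n'" for x x' y n n'
  proof -
    obtain y0 where y0: "app x y0" "\<forall>x' n n'. app x' y0 \<and> inrel E f x n \<and> inrel E f x' n' \<longrightarrow> isubset E n n'"
      using iffD1[OF D' h(1)] by blast
    have "y0 = y" using fn y0(1) h(2) by simp
    then show ?thesis using y0(2) h(3-5) by simp
  qed
  have rep_ex: "\<exists>x'. E x' D' \<and> app x' y" if xy: "app x y" "\<not> E y T" for x y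
  proof -
    have "\<exists>b. \<forall>n. E n b \<longleftrightarrow> E n U \<and> (\<exists>x'. app x' y \<and> inrel E f x' n)"
      by (rule sep) (unfold app_def cf_app_def inrel_def iopair_def iupair_def, intro defn_intros)
    then obtain N where N: "\<And>n. E n N \<longleftrightarrow> E n U \<and> (\<exists>x'. app x' y \<and> inrel E f x' n)" by blast
    have "E x D" using D xy by blast
    then obtain n0 where "inrel E f x n0" using cf_tot by blast
    then have "E n0 N" using N in_U xy by blast
    then obtain m where m: "E m N" "\<not> (\<exists>z. E z m \<and> E z N)" using reg by blast
    then obtain x1 where x1: "app x1 y" "inrel E f x1 m" using N by blast
    have x1D: "E x1 D" using D x1 by blast
    have "E x1 D'"
    proof -
      have "isubset E n n'" if "app x' y" "inrel E f x1 n" "inrel E f x' n'" for x' n n'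
      proof -
        have nm: "n = m" using cf_fun that(2) x1(2) by simp
        have "E n' N" using N that in_U by blast
        moreover have "inat E m" "inat E n'" using f(4) that x1 by blast+
        ultimately have "isubset E m n'" using nat_lin[of m n'] m by blast
        then show ?thesis using nm by simp
      qed
      then show ?thesis using x1D x1 xy D'[of x1] by blast
    qed
    then show ?thesis using x1 by blast
  qed
  have rep_uniq: "x = x'" if h: "E x D'" "E x' D'" "app x y" "app x' y" for x x' y
  proof -
    obtain n where n: "inrel E f x n" using cf_tot D'D h by blast
    obtain n' where n': "inrel E f x' n'" using cf_tot D'D h by blast
    have 1: "isubset E n n'" using D'_min[OF h(1,3,4) n n'] .
    have 2: "isubset E n' n" using D'_min[OF h(2,4,3) n' n] .
    have "n = n'"
    proof (rule extE)
      fix z show "E z n \<longleftrightarrow> E z n'" using 1 2 unfolding isubset_def by blast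
    qed
    then show ?thesis using cf_inj n n' by simp
  qed
  obtain P1 where P1: "\<And>a b. E a (un D (up T T)) \<Longrightarrow> E b (un D (up T T)) \<Longrightarrow> E (op a b) P1"
    using prod_sup by blast
  have "\<exists>b. \<forall>u. E u b \<longleftrightarrow> E u P1 \<and> (\<exists>x. E x D' \<and> iopair E u x T)"
    by (rule sep) (unfold iopair_def iupair_def, intro defn_intros)
  then obtain Nd where Nd0: "\<And>u. E u Nd \<longleftrightarrow> E u P1 \<and> (\<exists>x. E x D' \<and> iopair E u x T)" by blast
  have Nd: "E u Nd \<longleftrightarrow> (\<exists>x. E x D' \<and> u = op x T)" for u
    using Nd0 P1 D'D unfolding iopair_iff by auto
  have Ttr: "\<And>y z. E z y \<Longrightarrow> E y T \<Longrightarrow> E z T" using T unfolding itrans_def by blast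
  have tg_notT: "\<not> E (op x T) T" for x
  proof
    assume "E (op x T) T"
    moreover have "E (up x T) (op x T)" by (simp add: op_def)
    ultimately have "E (up x T) T" using Ttr by blast
    moreover have "E T (up x T)" by simp
    ultimately have "E T T" using Ttr by blast
    then show False using mem_irrefl by simp
  qed
  define Fld where "Fld = un T Nd"
  have Fld: "E u Fld \<longleftrightarrow> E u T \<or> (\<exists>x. E x D' \<and> u = op x T)" for u
    unfolding Fld_def using Nd by simp
  define Val where "Val = (\<lambda>u w. (E u T \<and> w = u) \<or> (\<exists>x. E x D' \<and> iopair E u x T \<and> app x w))"
  have Val_fun: "w = w'" if h: "Val u w" "Val u w'" for u w w'
  proof (cases "E u T")
    case True
    then show ?thesis using h tg_notT unfolding Val_def iopair_iff by auto
  next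
    case False
    then obtain x where x: "u = op x T" "app x w" using h(1) unfolding Val_def iopair_iff by blast
    obtain x' where x': "u = op x' T" "app x' w'" using h(2) False unfolding Val_def iopair_iff by blast
    have "x = x'" using x(1) x'(1) by (simp add: op_inj)
    then show ?thesis using x x' fn by simp
  qed
  have Val_tot: "\<exists>w. Val u w" if "E u Fld" for u
    using that D'_val unfolding Fld Val_def iopair_iff by blast
  define val where "val u = (THE w. Val u w)" for u
  have Val_val: "Val u (val u)" if "E u Fld" for u
    unfolding val_def using Val_tot[OF that] Val_fun by (metis theI)
  have Val_iff: "Val u w \<longleftrightarrow> w = val u" if "E u Fld" for u w
    using Val_val[OF that] Val_fun by blast
  have D'_notT: "\<not> E y T" if h: "E x D'" "app x y" for x y
  proof -
    obtain y0 where "app x y0" "\<not> E y0 T" using D'_val h(1) by blast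
    moreover have "y0 = y" using fn calculation(1) h(2) by simp
    ultimately show ?thesis by simp
  qed
  have Val_T: "w = u" if "Val u w" "E u T" for u w
    using that tg_notT unfolding Val_def iopair_iff by auto
  have Val_N: "\<exists>x. E x D' \<and> u = op x T \<and> app x w" if "Val u w" "\<not> E u T" for u w
    using that unfolding Val_def iopair_iff by blast
  have val_inj: "u = v" if h: "E u Fld" "E v Fld" "val u = val v" for u v
  proof -
    have a1: "Val u (val u)" using Val_val h(1) by blast
    have a2: "Val v (val u)" using Val_val[OF h(2)] h(3) by simp
    show ?thesis
    proof (cases "E u T")
      case True
      then have vu: "val u = u" using a1 Val_T by blast
      show ?thesis
      proof (cases "E v T")
        case True then show ?thesis using a2 Val_T vu by simp
      next
        case False
        then obtain x where "E x D'" "app x (val u)" using a2 Val_N by blast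
        then have "\<not> E (val u) T" using D'_notT by blast
        then show ?thesis using vu \<open>E u T\<close> by simp
      qed
    next
      case False
      then obtain x where x: "E x D'" "u = op x T" "app x (val u)" using a1 Val_N by blast
      then have nT: "\<not> E (val u) T" using D'_notT by blast
      have "\<not> E v T"
      proof
        assume "E v T" then have "val u = v" using a2 Val_T by blast
        then show False using nT \<open>E v T\<close> by simp
      qed
      then obtain x' where x': "E x' D'" "v = op x' T" "app x' (val u)" using a2 Val_N by blast
      have "x = x'" using rep_uniq[OF x(1) x'(1) x(3) x'(3)] .
      then show ?thesis using x(2) x'(2) by simp
    qed
  qed
  have ex_node: "\<exists>u. E u Fld \<and> Val u z" if hz: "E z T \<or> (\<exists>x'. app x' z)" for z
  proof (cases "E z T")
    case True
    have "E z Fld \<and> Val z z" unfolding Fld Val_def using True by blast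
    then show ?thesis by blast
  next
    case False
    then obtain x' where x': "E x' D'" "app x' z" using rep_ex hz by blast
    have "E (op x' T) Fld" unfolding Fld using x' by blast
    moreover have "Val (op x' T) z" unfolding Val_def iopair_iff using x' by blast
    ultimately show ?thesis by blast
  qed
  have K2: "\<exists>u. E u Fld \<and> val u = z" if h: "E v Fld" "E z (val v)" for v z
  proof -
    have vv: "Val v (val v)" using Val_val h(1) by blast
    have "E z T \<or> (\<exists>x'. app x' z)"
    proof (cases "E v T")
      case True
      then have "val v = v" using vv Val_T by blast
      then have "E z T" using h(2) True Ttr by simp
      then show ?thesis by simp
    next
      case False
      then obtain x where "E x D'" "v = op x T" "app x (val v)" using vv Val_N by blast
      then show ?thesis using cover h(2) by blast
    qed
    then obtain u where u: "E u Fld" "Val u z" using ex_node by blast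
    then have "z = val u" using Val_iff by blast
    then show ?thesis using u by blast
  qed
  obtain P2 where P2: "\<And>a b. E a Fld \<Longrightarrow> E b Fld \<Longrightarrow> E (op a b) P2"
    using prod_sup by blast
  have "\<exists>b. \<forall>p. E p b \<longleftrightarrow> E p P2 \<and> (\<exists>u v w w'. E u Fld \<and> E v Fld \<and> iopair E p u v \<and> Val u w \<and> Val v w' \<and> E w w')"
    by (rule sep) (unfold Val_def app_def cf_app_def iopair_def iupair_def, intro defn_intros)
  then obtain A where A0: "\<And>p. E p A \<longleftrightarrow> E p P2 \<and> (\<exists>u v w w'. E u Fld \<and> E v Fld \<and> iopair E p u v \<and> Val u w \<and> Val v w' \<and> E w w')"
    by blast
  have A_rel: "inrel E A u v \<longleftrightarrow> E u Fld \<and> E v Fld \<and> E (val u) (val v)" for u v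
  proof
    assume "inrel E A u v"
    then have "E (op u v) A" by (simp add: inrel_iff)
    then obtain u' v' w w' where "E u' Fld" "E v' Fld" "op u v = op u' v'" "Val u' w" "Val v' w'" "E w w'"
      using A0 unfolding iopair_iff by blast
    then have "u = u'" "v = v'" "E u' Fld" "E v' Fld" "Val u' w" "Val v' w'" "E w w'" unfolding op_inj by blast+
    then show "E u Fld \<and> E v Fld \<and> E (val u) (val v)" using Val_iff by simp
  next
    assume "E u Fld \<and> E v Fld \<and> E (val u) (val v)"
    then show "inrel E A u v" unfolding inrel_iff using A0 P2 Val_val unfolding iopair_iff by blast
  qed
  have fld_Fld: "E u Fld" if "ifld E A u" for u using that A_rel unfolding ifld_def by blast
  have irel: "irel E A" unfolding irel_def using A0 by blast
  have iext: "iextensional E A" unfolding iextensional_def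
  proof (intro allI impI)
    fix j k assume h: "ifld E A j \<and> ifld E A k \<and> (\<forall>i. inrel E A i j \<longleftrightarrow> inrel E A i k)"
    then have jk: "E j Fld" "E k Fld" using fld_Fld by auto
    have "val j = val k"
    proof (rule extE)
      fix z
      show "E z (val j) \<longleftrightarrow> E z (val k)"
      proof
        assume "E z (val j)"
        then obtain u where "E u Fld" "val u = z" using K2 jk by blast
        then show "E z (val k)" using h A_rel jk \<open>E z (val j)\<close> by metis
      next
        assume "E z (val k)"
        then obtain u where "E u Fld" "val u = z" using K2 jk by blast
        then show "E z (val j)" using h A_rel jk \<open>E z (val k)\<close> by metis
      qed
    qed
    then show "j = k" using val_inj jk by blast
  qed
  have iwf: "iwf E A" unfolding iwf_def
  proof (intro allI impI)
    fix S assume S: "(\<exists>x. E x S) \<and> (\<forall>x. E x S \<longrightarrow> ifld E A x)"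
    then obtain u0 where u0: "E u0 S" by blast
    have SF: "\<And>x. E x S \<Longrightarrow> E x Fld" using S fld_Fld by blast
    obtain W where W: "isubset E (up (val u0) (val u0)) W" "itrans E W" using TS by blast
    have "\<exists>b. \<forall>z. E z b \<longleftrightarrow> E z W \<and> (\<exists>u. E u S \<and> Val u z)"
      by (rule sep) (unfold Val_def app_def cf_app_def iopair_def iupair_def, intro defn_intros)
    then obtain V where V: "\<And>z. E z V \<longleftrightarrow> E z W \<and> (\<exists>u. E u S \<and> Val u z)" by blast
    have "E (val u0) V" using V W u0 SF Val_val unfolding isubset_def by auto
    then obtain z0 where z0: "E z0 V" "\<not> (\<exists>z. E z z0 \<and> E z V)" using reg by blast
    then obtain u where u: "E u S" "Val u z0" "E z0 W" using V by blast
    then have z0u: "z0 = val u" using Val_iff SF by blast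
    have "\<not> (\<exists>i. E i S \<and> inrel E A i u)"
    proof
      assume "\<exists>i. E i S \<and> inrel E A i u"
      then obtain i where i: "E i S" "E (val i) z0" using A_rel z0u by blast
      then have "E (val i) W" using W(2) u unfolding itrans_def by blast
      then have "E (val i) V" using V i Val_val SF by blast
      then show False using z0 i by blast
    qed
    then show "\<exists>m. E m S \<and> \<not> (\<exists>i. E i S \<and> inrel E A i m)" using u by blast
  qed
  obtain Fd X \<eta> where mc: "\<And>x. E x Fd \<longleftrightarrow> ifld E A x" "itrans E X" "ibij E \<eta> Fd X"
      "\<And>j k a b. inrel E \<eta> j a \<Longrightarrow> inrel E \<eta> k b \<Longrightarrow> (inrel E A j k \<longleftrightarrow> E a b)"
    using MC[OF irel iwf iext] by blast
  have eta_fun: "\<And>a b b'. inrel E \<eta> a b \<Longrightarrow> inrel E \<eta> a b' \<Longrightarrow> b = b'"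
    using mc(3) unfolding ibij_def ifun_def by blast
  have eta_dom: "\<And>a. E a Fd \<longleftrightarrow> (\<exists>b. inrel E \<eta> a b)"
    using mc(3) unfolding ibij_def idom_def by blast
  have eta_ran: "\<And>b. E b X \<longleftrightarrow> (\<exists>a. inrel E \<eta> a b)"
    using mc(3) unfolding ibij_def iran_def by blast
  have FdF: "E u Fld" if "E u Fd" for u using that mc(1) fld_Fld by blast
  have eta_val: "inrel E \<eta> u (val u)" if uFd: "E u Fd" for u
  proof (rule ccontr)
    assume nu: "\<not> inrel E \<eta> u (val u)"
    have "\<exists>b. \<forall>u. E u b \<longleftrightarrow> E u Fd \<and> \<not> (\<exists>w. Val u w \<and> inrel E \<eta> u w)"
      by (rule sep) (unfold Val_def app_def cf_app_def inrel_def iopair_def iupair_def, intro defn_intros)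
    then obtain B where B: "\<And>u. E u B \<longleftrightarrow> E u Fd \<and> \<not> (\<exists>w. Val u w \<and> inrel E \<eta> u w)" by blast
    have BF: "E v B \<longleftrightarrow> E v Fd \<and> \<not> inrel E \<eta> v (val v)" for v
    proof (cases "E v Fd")
      case True
      then have "\<And>w. Val v w \<longleftrightarrow> w = val v" using Val_iff FdF by blast
      then show ?thesis using B[of v] True by simp
    next
      case False then show ?thesis using B[of v] by simp
    qed
    have "E u B" using BF uFd nu by blast
    moreover have "\<forall>x. E x B \<longrightarrow> ifld E A x" using BF mc(1) by blast
    ultimately obtain m where m: "E m B" "\<not> (\<exists>i. E i B \<and> inrel E A i m)"
      using iwf unfolding iwf_def by blast
    have mFd: "E m Fd" and mF: "E m Fld" and mbad: "\<not> inrel E \<eta> m (val m)" using m BF FdF by auto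
    then obtain a where a: "inrel E \<eta> m a" using eta_dom by blast
    have good: "inrel E \<eta> j (val j)" if hj: "E j Fd" "inrel E A j m" for j
      using hj m BF by blast
    have "a = val m"
    proof (rule extE)
      fix z show "E z a \<longleftrightarrow> E z (val m)"
      proof
        assume za: "E z a"
        have "E a X" using eta_ran a by blast
        then have "E z X" using mc(2) za unfolding itrans_def by blast
        then obtain j where j: "inrel E \<eta> j z" using eta_ran by blast
        then have jFd: "E j Fd" using eta_dom by blast
        have jm: "inrel E A j m" using mc(4)[OF j a] za by blast
        have "inrel E \<eta> j (val j)" using good[OF jFd jm] .
        then have "z = val j" using eta_fun[OF j] by blast
        then show "E z (val m)" using jm A_rel by simp
      next
        assume zv: "E z (val m)"
        then obtain v where v: "E v Fld" "val v = z" using K2 mF by blast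
        then have vm: "inrel E A v m" using A_rel mF zv by simp
        then have "E v Fd" using mc(1) unfolding ifld_def by blast
        then have "inrel E \<eta> v (val v)" using good vm by blast
        then have "E (val v) a" using mc(4)[OF _ a] vm by blast
        then show "E z a" using v by simp
      qed
    qed
    then show False using a mbad by simp
  qed
  have isol: "\<not> E z (val u)" if h: "E u Fld" "\<not> E u Fd" for u z
  proof
    assume zu: "E z (val u)"
    then obtain v where "E v Fld" "val v = z" using K2 h by blast
    then have "inrel E A v u" using A_rel h zu by simp
    then show False using h mc(1) unfolding ifld_def by blast
  qed
  have "\<exists>b. \<forall>z. E z b \<longleftrightarrow> E z (un X (up emp emp)) \<and> (\<exists>x. app x z)"
    by (rule sep) (unfold app_def cf_app_def iopair_def iupair_def, intro defn_intros)
  then obtain Rs where Rs: "\<And>z. E z Rs \<longleftrightarrow> E z (un X (up emp emp)) \<and> (\<exists>x. app x z)" by blast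
  have inXe: "E y X \<or> y = emp" if hy: "app x y" for x y
  proof -
    obtain u where u: "E u Fld" "Val u y" using ex_node hy by blast
    then have uy: "y = val u" using Val_iff by blast
    show ?thesis
    proof (cases "E u Fd")
      case True
      then have "inrel E \<eta> u y" using eta_val uy by simp
      then show ?thesis using eta_ran by blast
    next
      case False
      then have "\<And>z. \<not> E z y" using isol u uy by blast
      then have "y = emp" using iempty_iff unfolding iempty_def by blast
      then show ?thesis by simp
    qed
  qed
  have "E z Rs \<longleftrightarrow> (\<exists>x. app x z)" for z
  proof
    assume "\<exists>x. app x z"
    then obtain x where "app x z" by blast
    then have "E z X \<or> z = emp" using inXe by blast
    then have "E z (un X (up emp emp))" by auto
    then show "E z Rs" using Rs \<open>app x z\<close> by blast
  qed (use Rs in blast)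
  then show ?thesis by blast
qed

end


theorem lemma9p5:
  fixes E :: "'m \<Rightarrow> 'm \<Rightarrow> bool" and \<phi> :: fm and env :: "nat \<Rightarrow> 'm"
  assumes model: "ZFTM E"
    and F_fun: "is_class_fun E \<phi> env"
    and D_set: "is_set E (cf_dom E \<phi> env)"
    and cases: "(\<forall>y z. cf_ran E \<phi> env y \<and> E z y \<longrightarrow> cf_ran E \<phi> env z)
              \<or> (\<exists>Y. \<forall>y. cf_ran E \<phi> env y \<longrightarrow> isubset E y Y)"
  shows "is_set E (cls E \<phi> env) \<and> is_set E (cf_ran E \<phi> env)"
proof -
  interpret zf E by (rule zf.intro) (rule model)
  have fn: "\<And>x y y'. cf_app E \<phi> env x y \<Longrightarrow> cf_app E \<phi> env x y' \<Longrightarrow> y = y'"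
  proof -
    fix x y y' assume "cf_app E \<phi> env x y" "cf_app E \<phi> env x y'"
    then obtain p q where "iopair E p x y" "cls E \<phi> env p" "iopair E q x y'" "cls E \<phi> env q"
      unfolding cf_app_def by blast
    then show "y = y'" using F_fun unfolding is_class_fun_def by blast
  qed
  obtain D where D: "\<And>x. E x D \<longleftrightarrow> (\<exists>y. cf_app E \<phi> env x y)"
    using D_set unfolding is_set_def cf_dom_def by blast
  obtain T where T: "itrans E T"
    and cover: "\<And>x y z. cf_app E \<phi> env x y \<Longrightarrow> E z y \<Longrightarrow> E z T \<or> (\<exists>x'. cf_app E \<phi> env x' z)"
  proof (cases "\<forall>y z. cf_ran E \<phi> env y \<and> E z y \<longrightarrow> cf_ran E \<phi> env z")
    case True
    have "itrans E emp" unfolding itrans_def by simp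
    moreover have "\<And>x y z. cf_app E \<phi> env x y \<Longrightarrow> E z y \<Longrightarrow> E z emp \<or> (\<exists>x'. cf_app E \<phi> env x' z)"
      using True unfolding cf_ran_def by blast
    ultimately show ?thesis by (rule that)
  next
    case False
    then obtain Y where Y: "\<And>y. cf_ran E \<phi> env y \<Longrightarrow> isubset E y Y" using cases by blast
    obtain T where T: "isubset E Y T" "itrans E T" using TS by blast
    have "\<And>x y z. cf_app E \<phi> env x y \<Longrightarrow> E z y \<Longrightarrow> E z T \<or> (\<exists>x'. cf_app E \<phi> env x' z)"
    proof -
      fix x y z assume "cf_app E \<phi> env x y" "E z y"
      then have "isubset E y Y" using Y unfolding cf_ran_def by blast
      then have "E z T" using T(1) \<open>E z y\<close> unfolding isubset_def by blast
      then show "E z T \<or> (\<exists>x'. cf_app E \<phi> env x' z)" by simp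
    qed
    then show ?thesis using T(2) that by blast
  qed
  obtain Rs where Rs: "\<forall>z. E z Rs \<longleftrightarrow> (\<exists>x. cf_app E \<phi> env x z)"
    using main[of \<phi> env D T] fn D T cover by blast
  have ran: "is_set E (cf_ran E \<phi> env)" unfolding is_set_def cf_ran_def using Rs by blast
  obtain P3 where P3: "\<And>a b. E a (un D Rs) \<Longrightarrow> E b (un D Rs) \<Longrightarrow> E (op a b) P3"
    using prod_sup by blast
  have "\<exists>b. \<forall>z. E z b \<longleftrightarrow> E z P3 \<and> cls E \<phi> env z"
    by (rule sep) (intro defn_intros)
  then obtain Fs where Fs: "\<And>z. E z Fs \<longleftrightarrow> E z P3 \<and> cls E \<phi> env z" by blast
  have "E p Fs \<longleftrightarrow> cls E \<phi> env p" for p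
  proof
    assume cp: "cls E \<phi> env p"
    then obtain a b where ab: "iopair E p a b" using F_fun unfolding is_class_fun_def by blast
    then have "cf_app E \<phi> env a b" unfolding cf_app_def using cp by blast
    then have "E a D" "E b Rs" using D Rs by blast+
    then have "E (op a b) P3" using P3 by simp
    then show "E p Fs" using Fs cp ab unfolding iopair_iff by simp
  qed (use Fs in blast)
  then have "is_set E (cls E \<phi> env)" unfolding is_set_def by blast
  then show ?thesis using ran by blast
qed

end
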